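(* Let $x=(x_0x_1)^{-1}$ and $y=x_2xx_2^{-1}$. Then for all $j\ge0$: $x^{2^{2j+1}}=M_{2^{2j+1}-1}([51,89,196],[0,0,0],\dots)$, $y^{2^{2j+1}}=M_{2^{2j+1}-1}([51,89,196],[0,157,106],\dots)$, $x^{2^{2j+2}}=M_{2^{2j+2}-1}([28,235,129],[0,0,0],\dots)$, $y^{2^{2j+2}}=M_{2^{2j+2}-1}([28,235,129],[39,208,186],\dots)$.
   Context: Consider infinite upper unitriangular block matrices $X=(X_{r,s})_{r,s\ge1}$ whose entries are $3\times3$ matrices over $\mathbb F_2$, with $X_{r,r}=I$, $X_{r,s}=0$ for $s<r$, and whose upper diagonals are $3$-periodic: for each $j\ge1$ there are $a_{j1},a_{j2},a_{j3}\in M(3,\mathbb F_2)$ with $X_{r,r+j}=a_{j,i}$, where $i\in\{1,2,3\}$, $i\equiv r\pmod 3$; $a_j=[a_{j1},a_{j2},a_{j3}]$ is the $j$-th upper diagonal. For $l\ge0$, $M_l(c_1,c_2,\dots)$ denotes such a matrix whose first $l$ upper diagonals are zero and whose $(l+1)$-st, $(l+2)$-nd, $\dots$ upper diagonals are $c_1,c_2,\dots$; diagonals hidden in "$\dots$" are unspecified, while a matrix written $M_0(c_1,\dots,c_m)$ without dots has all further diagonals zero. A matrix $u=(u_{pq})\in M(3,\mathbb F_2)$ is encoded by the integer $256u_{11}+128u_{12}+64u_{13}+32u_{21}+16u_{22}+8u_{23}+4u_{31}+2u_{32}+u_{33}$, and a diagonal by the triple of integers of its three blocks. The elements are $x_0=M_0([11,11,11],[17,17,17],[26,26,26],[11,11,0],[17,0,0])$,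 $x_1=M_0([23,224,138],[59,136,495],[26,488,227],[23,224,0],[59,0,0])$, $x_2=M_0([46,68,217],[12,194,363],[26,326,77],[46,68,0],[12,0,0])$. *)

theory Defs
  imports "HOL-Analysis.Analysis" "HOL-Library.Z2"
begin

text \<open>Blocks: 3x3 matrices over the field F2 (type bit).  Infinite block
matrices are indexed by rows/columns 0,1,2,...  (row r here is row r+1 of the paper).\<close>

type_synonym blk = "bit ^ 3 ^ 3"
type_synonym imat = "nat \<Rightarrow> nat \<Rightarrow> blk"

definition idx3 :: "3 \<Rightarrow> nat" where
  "idx3 p = (if p = 0 then 0 else if p = 1 then 1 else 2)"

text \<open>Decoding of the integer code 256u11+128u12+...+u33 of a block.\<close>
definition decode :: "nat \<Rightarrow> blk" where
  "decode n = (\<chi> p q. if odd (n div 2 ^ (8 - (3 * idx3 p + idx3 q))) then 1 else 0)"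

definition imul :: "imat \<Rightarrow> imat \<Rightarrow> imat" where
  "imul X Y r s = (\<Sum>t\<in>{r..s}. X r t ** Y t s)"

definition iid :: imat where
  "iid r s = (if r = s then mat 1 else 0)"

definition UT :: "imat set" where
  "UT = {X. \<forall>r. X r r = mat 1 \<and> (\<forall>s<r. X r s = 0)}"

text \<open>Upper diagonals are 3-periodic (a j (r mod 3) is the block a_{j,i}, i = r+1 mod 3 in 1-based indexing).\<close>
definition periodic3 :: "imat \<Rightarrow> bool" where
  "periodic3 X = (\<forall>j\<ge>1. \<exists>a :: nat \<Rightarrow> blk. \<forall>r. X r (r + j) = a (r mod 3))"

definition G :: "imat set" where
  "G = {X \<in> UT. periodic3 X}"

primrec ipow :: "imat \<Rightarrow> nat \<Rightarrow> imat" where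
  "ipow X 0 = iid"
| "ipow X (Suc n) = imul (ipow X n) X"

definition iinv :: "imat \<Rightarrow> imat" where
  "iinv X = (THE Y. Y \<in> UT \<and> imul X Y = iid \<and> imul Y X = iid)"

text \<open>M_0(c_1,...,c_m) with all further diagonals zero; each c_j is a list of three codes.\<close>
definition M0 :: "nat list list \<Rightarrow> imat" where
  "M0 ds r s = (if s < r then 0 else if s = r then mat 1
      else if s - r \<le> length ds then decode ((ds ! (s - r - 1)) ! (r mod 3)) else 0)"

text \<open>X is of the form M_l(c_1,...,c_m,...): an element of G whose first l upper
  diagonals vanish and whose (l+k)-th upper diagonal is c_k for k = 1..m.\<close>
definition has_form :: "nat \<Rightarrow> nat list list \<Rightarrow> imat \<Rightarrow> bool" where
  "has_form l cs X \<longleftrightarrow> X \<in> G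
     \<and> (\<forall>j. 1 \<le> j \<and> j \<le> l \<longrightarrow> (\<forall>r. X r (r + j) = 0))
     \<and> (\<forall>k < length cs. \<forall>r. X r (r + l + k + 1) = decode ((cs ! k) ! (r mod 3)))"

definition x0 :: imat where
  "x0 = M0 [[11,11,11],[17,17,17],[26,26,26],[11,11,0],[17,0,0]]"
definition x1 :: imat where
  "x1 = M0 [[23,224,138],[59,136,495],[26,488,227],[23,224,0],[59,0,0]]"
definition x2 :: imat where
  "x2 = M0 [[46,68,217],[12,194,363],[26,326,77],[46,68,0],[12,0,0]]"

definition xx :: imat where "xx = iinv (imul x0 x1)"
definition yy :: imat where "yy = imul (imul x2 xx) (iinv x2)"

end

theory Submission
  imports Defs
begin


lemma mm_radd: "((A::blk) + B) ** (C::blk) = A ** C + B ** C"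
  by (vector matrix_matrix_mult_def sum.distrib[symmetric] field_simps)
lemma mm_ladd: "(C::blk) ** (A + B) = C ** A + C ** B"
  by (rule matrix_add_ldistrib)

lemma mm_sum_left: fixes f :: "_ \<Rightarrow> blk" shows "finite S \<Longrightarrow> (\<Sum>i\<in>S. f i) ** (B::blk) = (\<Sum>i\<in>S. f i ** B)"
proof (induction S rule: finite_induct)
  case (insert x F) then show ?case using mm_radd[of "f x" "sum f F" B] by simp
qed simp
lemma mm_sum_right: fixes f :: "_ \<Rightarrow> blk" shows "finite S \<Longrightarrow> (B::blk) ** (\<Sum>i\<in>S. f i) = (\<Sum>i\<in>S. B ** f i)"
  by (induction S rule: finite_induct) (auto simp: mm_ladd)

lemma bit_add_self: "(a::bit) + a = 0" by (cases a) auto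
lemma blk_add_self: "(a::blk) + a = 0"
  by (simp add: vec_eq_iff bit_add_self)
lemma blk_add_zero_eq: "(a::blk) + b = 0 \<Longrightarrow> a = b"
proof -
  assume h: "a + b = 0"
  have "a = a + (b + b)" by (simp add: blk_add_self)
  also have "\<dots> = (a + b) + b" by (simp add: add.assoc)
  finally show ?thesis using h by simp
qed

lemma imul_assoc: "imul (imul X Y) Z = imul X (imul Y Z)"
proof (intro ext)
  fix r s
  have "imul (imul X Y) Z r s = (\<Sum>t\<in>{r..s}. \<Sum>u\<in>{r..t}. X r u ** Y u t ** Z t s)"
    unfolding imul_def by (simp add: mm_sum_left)
  also have "\<dots> = (\<Sum>t\<in>{r..s}. \<Sum>u\<in>{u\<in>{r..s}. u \<le> t}. X r u ** Y u t ** Z t s)"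
    by (rule sum.cong) (auto intro!: sum.cong)
  also have "\<dots> = (\<Sum>u\<in>{r..s}. \<Sum>t\<in>{t\<in>{r..s}. u \<le> t}. X r u ** Y u t ** Z t s)"
    by (rule sum.swap_restrict) auto
  also have "\<dots> = (\<Sum>u\<in>{r..s}. \<Sum>t\<in>{u..s}. X r u ** (Y u t ** Z t s))"
    by (rule sum.cong) (auto intro!: sum.cong simp: matrix_mul_assoc)
  also have "\<dots> = imul X (imul Y Z) r s"
    unfolding imul_def by (simp add: mm_sum_right)
  finally show "imul (imul X Y) Z r s = imul X (imul Y Z) r s" .
qed

definition LZ :: "imat \<Rightarrow> bool" where "LZ X = (\<forall>r s. s < r \<longrightarrow> X r s = 0)"

lemma UT_LZ: "X \<in> UT \<Longrightarrow> LZ X" by (auto simp: UT_def LZ_def)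

lemma imul_iid_left: "LZ X \<Longrightarrow> imul iid X = X"
proof (intro ext)
  fix r s assume "LZ X"
  show "imul iid X r s = X r s"
  proof (cases "r \<le> s")
    case True
    have "imul iid X r s = (\<Sum>t\<in>{r..s}. if t = r then X t s else 0)"
      unfolding imul_def iid_def by (rule sum.cong) auto
    also have "\<dots> = X r s" using True by (simp add: sum.delta)
    finally show ?thesis .
  next
    case False then show ?thesis using \<open>LZ X\<close> by (simp add: imul_def LZ_def)
  qed
qed

lemma imul_iid_right: "LZ X \<Longrightarrow> imul X iid = X"
proof (intro ext)
  fix r s assume "LZ X"
  show "imul X iid r s = X r s"
  proof (cases "r \<le> s")
    case True
    have "imul X iid r s = (\<Sum>t\<in>{r..s}. if t = s then X r t else 0)"
      unfolding imul_def iid_def by (rule sum.cong) auto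
    also have "\<dots> = X r s" using True by (simp add: sum.delta')
    finally show ?thesis .
  next
    case False then show ?thesis using \<open>LZ X\<close> by (simp add: imul_def LZ_def)
  qed
qed

lemma iid_UT: "iid \<in> UT" by (simp add: UT_def iid_def)

lemma imul_UT: "X \<in> UT \<Longrightarrow> Y \<in> UT \<Longrightarrow> imul X Y \<in> UT"
  by (simp add: UT_def imul_def)

lemma ipow_UT: "X \<in> UT \<Longrightarrow> ipow X n \<in> UT"
  by (induction n) (auto simp: iid_UT imul_UT)

lemma ipow_add: "X \<in> UT \<Longrightarrow> ipow X (a + b) = imul (ipow X a) (ipow X b)"
proof (induction b)
  case 0 then show ?case by (simp add: imul_iid_right UT_LZ ipow_UT)
next
  case (Suc b) then show ?case by (simp add: imul_assoc)
qed

lemma ipow_double: "X \<in> UT \<Longrightarrow> ipow X (2 * n) = imul (ipow X n) (ipow X n)"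
  using ipow_add[of X n n] by (simp add: mult_2)

definition shift3 :: "imat \<Rightarrow> imat" where "shift3 X r s = X (r + 3) (s + 3)"

lemma shift3_iter: "shift3 X = X \<Longrightarrow> X (r + 3 * n) (s + 3 * n) = X r s"
proof (induction n)
  case 0 then show ?case by simp
next
  case (Suc n)
  have e: "r + 3 * Suc n = (r + 3*n) + 3" "s + 3 * Suc n = (s + 3*n) + 3" by simp_all
  have "X (r + 3 * Suc n) (s + 3 * Suc n) = shift3 X (r + 3*n) (s + 3*n)"
    unfolding e shift3_def by (rule refl)
  then show ?case using Suc by simp
qed

lemma G_iff: "X \<in> G \<longleftrightarrow> X \<in> UT \<and> shift3 X = X"
proof
  assume "X \<in> G"
  then have u: "X \<in> UT" and p: "periodic3 X" by (auto simp: G_def)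
  have "shift3 X r s = X r s" for r s
  proof (cases "r < s")
    case True
    then obtain j where j: "s = r + j" "j \<ge> 1" by (metis less_imp_add_positive less_eq_Suc_le One_nat_def)
    obtain a where a: "\<forall>r. X r (r + j) = a (r mod 3)" using p j(2) unfolding periodic3_def by blast
    have "shift3 X r s = X (r+3) ((r+3) + j)" by (simp add: shift3_def j add_ac)
    also have "\<dots> = a (r mod 3)" using a by simp
    also have "\<dots> = X r s" using a j by simp
    finally show ?thesis .
  next
    case False
    then show ?thesis using u by (cases "r = s") (auto simp: UT_def shift3_def)
  qed
  then show "X \<in> UT \<and> shift3 X = X" using u by auto
next
  assume h: "X \<in> UT \<and> shift3 X = X"
  have "periodic3 X"
    unfolding periodic3_def
  proof (intro allI impI)
    fix j :: nat
    show "\<exists>a. \<forall>r. X r (r + j) = a (r mod 3)"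
    proof (intro exI allI)
      fix r
      have "X (r mod 3 + 3 * (r div 3)) (r mod 3 + j + 3 * (r div 3)) = X (r mod 3) (r mod 3 + j)"
        using h by (intro shift3_iter) auto
      moreover have "r mod 3 + 3 * (r div 3) = r" by simp
      moreover have "r mod 3 + j + 3 * (r div 3) = r + j" by simp
      ultimately show "X r (r + j) = (\<lambda>i. X i (i + j)) (r mod 3)" by simp
    qed
  qed
  then show "X \<in> G" using h by (simp add: G_def)
qed

lemma shift3_imul: "shift3 (imul X Y) = imul (shift3 X) (shift3 Y)"
proof (intro ext)
  fix r s
  have "shift3 (imul X Y) r s = (\<Sum>t\<in>{r+3..s+3}. X (r+3) t ** Y t (s+3))"
    by (simp add: shift3_def imul_def)
  also have "\<dots> = (\<Sum>t\<in>{r..s}. X (r+3) (t+3) ** Y (t+3) (s+3))"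
    by (rule sum.shift_bounds_cl_nat_ivl)
  finally show "shift3 (imul X Y) r s = imul (shift3 X) (shift3 Y) r s"
    by (simp add: shift3_def imul_def)
qed

lemma shift3_iid: "shift3 iid = iid" by (intro ext) (auto simp: shift3_def iid_def)

lemma imul_G: "X \<in> G \<Longrightarrow> Y \<in> G \<Longrightarrow> imul X Y \<in> G"
  by (simp add: G_iff imul_UT shift3_imul)

lemma iid_G: "iid \<in> G" by (simp add: G_iff iid_UT shift3_iid)

lemma ipow_G: "X \<in> G \<Longrightarrow> ipow X n \<in> G"
  by (induction n) (auto simp: iid_G imul_G)

function rinv :: "imat \<Rightarrow> nat \<Rightarrow> nat \<Rightarrow> blk" where
  "rinv P r s = (if s < r then 0 else if s = r then mat 1
     else - (\<Sum>t\<in>{r<..s}. P r t ** rinv P t s))"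
  by auto
termination by (relation "Wellfounded.measure (\<lambda>(P,r,s). s - r)") auto

declare rinv.simps[simp del]

lemma rinv_UT: "rinv P \<in> UT"
  by (simp add: UT_def rinv.simps)

lemma rinv_right: "P \<in> UT \<Longrightarrow> imul P (rinv P) = iid"
proof (intro ext)
  fix r s assume P: "P \<in> UT"
  show "imul P (rinv P) r s = iid r s"
  proof (cases "r < s")
    case True
    have "{r..s} = insert r {r<..s}" using True by auto
    then have "imul P (rinv P) r s = P r r ** rinv P r s + (\<Sum>t\<in>{r<..s}. P r t ** rinv P t s)"
      by (simp add: imul_def)
    also have "\<dots> = 0" using True P by (simp add: UT_def rinv.simps[of P r s])
    finally show ?thesis using True by (simp add: iid_def)
  next
    case False
    then show ?thesis using P
      by (cases "r = s") (auto simp: imul_def iid_def UT_def rinv.simps)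
  qed
qed

lemma inv_unique:
  assumes "Y \<in> UT" "Y' \<in> UT" "imul P Y = iid" "imul Y' P = iid"
  shows "Y = Y'"
proof -
  have "Y = imul (imul Y' P) Y" using assms by (simp add: imul_iid_left UT_LZ)
  also have "\<dots> = imul Y' (imul P Y)" by (simp add: imul_assoc)
  also have "\<dots> = Y'" using assms by (simp add: imul_iid_right UT_LZ)
  finally show ?thesis .
qed

lemma rinv_left: "P \<in> UT \<Longrightarrow> imul (rinv P) P = iid"
proof -
  assume P: "P \<in> UT"
  let ?R = "rinv P" let ?S = "rinv ?R"
  have "?S = P" using inv_unique[of ?S P ?R] P rinv_UT rinv_right[of ?R] rinv_right[of P]
    by simp
  then show ?thesis using rinv_right[of ?R] rinv_UT by metis
qed

lemma iinv_eq: "P \<in> UT \<Longrightarrow> iinv P = rinv P"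
  unfolding iinv_def
proof (rule the_equality)
  assume P: "P \<in> UT"
  show "rinv P \<in> UT \<and> imul P (rinv P) = iid \<and> imul (rinv P) P = iid"
    using P rinv_UT rinv_right rinv_left by auto
  fix Y assume "Y \<in> UT \<and> imul P Y = iid \<and> imul Y P = iid"
  then show "Y = rinv P" using inv_unique[of Y "rinv P" P] rinv_UT rinv_left P by auto
qed

lemma iinv_props: "P \<in> UT \<Longrightarrow> iinv P \<in> UT \<and> imul P (iinv P) = iid \<and> imul (iinv P) P = iid"
  by (simp add: iinv_eq rinv_UT rinv_right rinv_left)

lemma shift3_UT: "X \<in> UT \<Longrightarrow> shift3 X \<in> UT" by (simp add: UT_def shift3_def)

lemma iinv_G: "P \<in> G \<Longrightarrow> iinv P \<in> G"
proof -
  assume "P \<in> G"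
  then have P: "P \<in> UT" "shift3 P = P" by (auto simp: G_iff)
  let ?R = "iinv P"
  have R: "?R \<in> UT" "imul P ?R = iid" "imul ?R P = iid" using iinv_props[OF P(1)] by auto
  have "imul P (shift3 ?R) = iid"
    using R(2) P(2) shift3_imul[of P ?R] shift3_iid by metis
  then have "shift3 ?R = ?R" using inv_unique[of "shift3 ?R" ?R P] R shift3_UT by auto
  then show ?thesis using R by (simp add: G_iff)
qed

definition mk :: "bit \<Rightarrow> bit \<Rightarrow> bit \<Rightarrow> bit \<Rightarrow> bit \<Rightarrow> bit \<Rightarrow> bit \<Rightarrow> bit \<Rightarrow> bit \<Rightarrow> blk" where
  "mk a b c d e f g h i = (\<chi> p q. [[a,b,c],[d,e,f],[g,h,i]] ! idx3 p ! idx3 q)"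

lemma idx3_simps: "idx3 1 = 1" "idx3 2 = 2" "idx3 3 = 0"
  by (simp_all add: idx3_def)

lemma blk_ext3: "(\<And>p q. p \<in> {1,2,3::3} \<Longrightarrow> q \<in> {1,2,3::3} \<Longrightarrow> (A::blk) $ p $ q = B $ p $ q) \<Longrightarrow> A = B"
  by (simp add: vec_eq_iff forall_3)

lemma mk_mult: "mk a1 a2 a3 a4 a5 a6 a7 a8 a9 ** mk b1 b2 b3 b4 b5 b6 b7 b8 b9 =
  mk (a2*b4+a3*b7+a1*b1) (a2*b5+a3*b8+a1*b2) (a2*b6+a3*b9+a1*b3) (a5*b4+a6*b7+a4*b1) (a5*b5+a6*b8+a4*b2) (a5*b6+a6*b9+a4*b3) (a8*b4+a9*b7+a7*b1) (a8*b5+a9*b8+a7*b2) (a8*b6+a9*b9+a7*b3)"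
  by (simp del: add_bit_eq_xor mult_bit_eq_and add: mk_def matrix_matrix_mult_def sum_3 idx3_simps vec_eq_iff forall_3)

lemma mk_add: "mk a1 a2 a3 a4 a5 a6 a7 a8 a9 + mk b1 b2 b3 b4 b5 b6 b7 b8 b9 =
  mk (a1+b1) (a2+b2) (a3+b3) (a4+b4) (a5+b5) (a6+b6) (a7+b7) (a8+b8) (a9+b9)"
  by (simp del: add_bit_eq_xor mult_bit_eq_and add: mk_def idx3_simps vec_eq_iff forall_3)

definition bt :: "nat \<Rightarrow> nat \<Rightarrow> bit" where "bt n k = (if odd (n div 2 ^ k) then 1 else 0)"

lemma decode_mk: "decode n = mk (bt n 8) (bt n 7) (bt n 6) (bt n 5) (bt n 4) (bt n 3) (bt n 2) (bt n 1) (bt n 0)"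
  by (simp add: mk_def decode_def idx3_simps bt_def vec_eq_iff forall_3)



definition dg :: "nat list \<Rightarrow> nat \<Rightarrow> blk" where "dg c r = decode (c ! (r mod 3))"

lemmas beval = decode_mk mk_mult mk_add bt_def

lemma mod3_cases: "(r::nat) mod 3 = 0 \<or> r mod 3 = 1 \<or> r mod 3 = 2" by arith

lemma dg_shift: "dg c (r + k) = decode (c ! ((r mod 3 + k) mod 3))"
  by (simp add: dg_def mod_add_left_eq)
lemma dg_shift1: "dg c (Suc r) = decode (c ! ((r mod 3 + 1) mod 3))"
  using dg_shift[of c r 1] by simp

lemma dg_eval: "dg c r = decode (c ! (r mod 3))" by (simp add: dg_def)

lemma M0_dg: "1 \<le> k \<Longrightarrow> k \<le> length ds \<Longrightarrow> M0 ds r (r + k) = dg (ds ! (k - 1)) r"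
  by (simp add: M0_def dg_def)

lemma imul_d1: "X \<in> UT \<Longrightarrow> Y \<in> UT \<Longrightarrow> imul X Y r (r+1) = X r (r+1) + Y r (r+1)"
proof -
  assume "X \<in> UT" "Y \<in> UT"
  moreover have "{r..r+1} = {r, Suc r}" by auto
  ultimately show ?thesis by (simp add: imul_def UT_def add.commute)
qed

lemma imul_d2: "X \<in> UT \<Longrightarrow> Y \<in> UT \<Longrightarrow>
   imul X Y r (r+2) = X r (r+2) + X r (r+1) ** Y (r+1) (r+2) + Y r (r+2)"
proof -
  assume "X \<in> UT" "Y \<in> UT"
  moreover have "{r..r+2} = {r, Suc r, Suc (Suc r)}" by auto
  ultimately show ?thesis by (simp add: imul_def UT_def add_ac)
qed

lemma inv_d1: "P \<in> UT \<Longrightarrow> R \<in> UT \<Longrightarrow> imul P R = iid \<Longrightarrow> R r (r+1) = P r (r+1)"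
proof -
  assume a: "P \<in> UT" "R \<in> UT" "imul P R = iid"
  then have "P r (r+1) + R r (r+1) = 0" using imul_d1[of P R r] by (simp add: iid_def)
  then show ?thesis using blk_add_zero_eq by metis
qed

lemma inv_d2: "P \<in> UT \<Longrightarrow> R \<in> UT \<Longrightarrow> imul P R = iid \<Longrightarrow>
   R r (r+2) = P r (r+2) + P r (r+1) ** R (r+1) (r+2)"
proof -
  assume a: "P \<in> UT" "R \<in> UT" "imul P R = iid"
  then have "(P r (r+2) + P r (r+1) ** R (r+1) (r+2)) + R r (r+2) = 0"
    using imul_d2[of P R r] by (simp add: iid_def)
  then show ?thesis using blk_add_zero_eq by metis
qed

lemma M0_G: "M0 ds \<in> G"
proof -
  have "M0 ds \<in> UT" by (simp add: UT_def M0_def)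
  moreover have "shift3 (M0 ds) = M0 ds"
    by (intro ext) (simp add: shift3_def M0_def)
  ultimately show ?thesis by (simp add: G_iff)
qed

lemmas M0_d1 = M0_dg[where k=1, simplified]
lemmas M0_d2 = M0_dg[where k=2, simplified]
lemmas imul_d1' = imul_d1[simplified]
lemmas imul_d2' = imul_d2[simplified]

lemma G_UT: "X \<in> G \<Longrightarrow> X \<in> UT" by (simp add: G_def)

lemma x0G: "x0 \<in> G" and x1G: "x1 \<in> G" and x2G: "x2 \<in> G"
  by (simp_all add: x0_def x1_def x2_def M0_G)

lemma PG: "imul x0 x1 \<in> G" by (simp add: imul_G x0G x1G)
lemma xxG: "xx \<in> G" by (simp add: xx_def iinv_G PG)
lemma x2iG: "iinv x2 \<in> G" by (simp add: iinv_G x2G)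
lemma WG: "imul x2 xx \<in> G" by (simp add: imul_G x2G xxG)
lemma yyG: "yy \<in> G" by (simp add: yy_def imul_G WG x2iG)

lemma x0_1: "x0 r (Suc r) = dg [11,11,11] r" by (simp add: x0_def M0_d1 M0_d2)
lemma x0_2: "x0 r (Suc (Suc r)) = dg [17,17,17] r" by (simp add: x0_def M0_d1 M0_d2)
lemma x1_1: "x1 r (Suc r) = dg [23,224,138] r" by (simp add: x1_def M0_d1 M0_d2)
lemma x1_2: "x1 r (Suc (Suc r)) = dg [59,136,495] r" by (simp add: x1_def M0_d1 M0_d2)
lemma x2_1: "x2 r (Suc r) = dg [46,68,217] r" by (simp add: x2_def M0_d1 M0_d2)
lemma x2_2: "x2 r (Suc (Suc r)) = dg [12,194,363] r" by (simp add: x2_def M0_d1 M0_d2)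

lemma P_1: "imul x0 x1 r (Suc r) = dg [28,235,129] r"
proof -
  have "imul x0 x1 r (Suc r) = dg [11,11,11] r + dg [23,224,138] r"
    by (simp add: imul_d1' G_UT x0G x1G x0_1 x1_1)
  also have "\<dots> = dg [28,235,129] r"
    using mod3_cases[of r] by (elim disjE) (simp_all add: dg_eval beval)
  finally show ?thesis .
qed

lemma mod3_cases2: "(r mod 3 = 0 \<and> Suc r mod 3 = 1 \<and> Suc (Suc r) mod 3 = 2) \<or> (r mod 3 = 1 \<and> Suc r mod 3 = 2 \<and> Suc (Suc r) mod 3 = 0) \<or> (r mod 3 = 2 \<and> Suc r mod 3 = 0 \<and> Suc (Suc r) mod 3 = 1)"
  by arith

lemma dg_shift2: "dg c (Suc (Suc r)) = decode (c ! ((r mod 3 + 2) mod 3))"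
  using dg_shift[of c r 2] by simp

lemmas inv_d1' = inv_d1[simplified]
lemmas inv_d2' = inv_d2[simplified]


lemma P_2: "imul x0 x1 r (Suc (Suc r)) = dg [46,138,451] r"
proof -
  have "imul x0 x1 r (Suc (Suc r)) = dg [17,17,17] r + dg [11,11,11] r ** dg [23,224,138] (Suc r) + dg [59,136,495] r"
    by (simp add: imul_d2' G_UT x0G x1G x0_1 x1_1 x0_2 x1_2)
  also have "\<dots> = dg [46,138,451] r"
    by (insert mod3_cases2[of r], elim disjE conjE; simp add: dg_eval beval)
  finally show ?thesis .
qed

lemma xx_inv: "imul (imul x0 x1) xx = iid" "xx \<in> UT"
  using iinv_props[OF G_UT[OF PG]] by (auto simp: xx_def)

lemma xx_1: "xx r (Suc r) = dg [28,235,129] r"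
  using inv_d1'[OF G_UT[OF PG] xx_inv(2) xx_inv(1)] P_1 by simp

lemma xx_2: "xx r (Suc (Suc r)) = dg [29,211,263] r"
proof -
  have "xx r (Suc (Suc r)) = dg [46,138,451] r + dg [28,235,129] r ** dg [28,235,129] (Suc r)"
    using inv_d2'[OF G_UT[OF PG] xx_inv(2) xx_inv(1)] P_1 P_2 xx_1 by simp
  also have "\<dots> = dg [29,211,263] r"
    by (insert mod3_cases2[of r], elim disjE conjE; simp add: dg_eval beval)
  finally show ?thesis .
qed

lemma v_inv: "imul x2 (iinv x2) = iid" "iinv x2 \<in> UT"
  using iinv_props[OF G_UT[OF x2G]] by auto

lemma v_1: "iinv x2 r (Suc r) = dg [46,68,217] r"
  using inv_d1'[OF G_UT[OF x2G] v_inv(2) v_inv(1)] x2_1 by simp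

lemma v_2: "iinv x2 r (Suc (Suc r)) = dg [37,129,437] r"
proof -
  have "iinv x2 r (Suc (Suc r)) = dg [12,194,363] r + dg [46,68,217] r ** dg [46,68,217] (Suc r)"
    using inv_d2'[OF G_UT[OF x2G] v_inv(2) v_inv(1)] x2_1 x2_2 v_1 by simp
  also have "\<dots> = dg [37,129,437] r"
    by (insert mod3_cases2[of r], elim disjE conjE; simp add: dg_eval beval)
  finally show ?thesis .
qed

lemma W_1: "imul x2 xx r (Suc r) = dg [50,175,88] r"
proof -
  have "imul x2 xx r (Suc r) = dg [46,68,217] r + dg [28,235,129] r"
    by (simp add: imul_d1' G_UT x2G xxG x2_1 xx_1)
  also have "\<dots> = dg [50,175,88] r"
    by (insert mod3_cases2[of r], elim disjE conjE; simp add: dg_eval beval)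
  finally show ?thesis .
qed

lemma W_2: "imul x2 xx r (Suc (Suc r)) = dg [23,83,400] r"
proof -
  have "imul x2 xx r (Suc (Suc r)) = dg [12,194,363] r + dg [46,68,217] r ** dg [28,235,129] (Suc r) + dg [29,211,263] r"
    by (simp add: imul_d2' G_UT x2G xxG x2_1 xx_1 x2_2 xx_2)
  also have "\<dots> = dg [23,83,400] r"
    by (insert mod3_cases2[of r], elim disjE conjE; simp add: dg_eval beval)
  finally show ?thesis .
qed

lemma yy_1: "yy r (Suc r) = dg [28,235,129] r"
proof -
  have "yy r (Suc r) = dg [50,175,88] r + dg [46,68,217] r"
    by (simp add: yy_def imul_d1' G_UT WG x2iG W_1 v_1)
  also have "\<dots> = dg [28,235,129] r"
    by (insert mod3_cases2[of r], elim disjE conjE; simp add: dg_eval beval)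
  finally show ?thesis .
qed

lemma yy_2: "yy r (Suc (Suc r)) = dg [58,3,445] r"
proof -
  have "yy r (Suc (Suc r)) = dg [23,83,400] r + dg [50,175,88] r ** dg [46,68,217] (Suc r) + dg [37,129,437] r"
    by (simp add: yy_def imul_d2' G_UT WG x2iG W_1 v_1 W_2 v_2)
  also have "\<dots> = dg [58,3,445] r"
    by (insert mod3_cases2[of r], elim disjE conjE; simp add: dg_eval beval)
  finally show ?thesis .
qed



definition Form :: "nat \<Rightarrow> nat list \<Rightarrow> nat list \<Rightarrow> imat \<Rightarrow> bool" where
  "Form L a b X \<longleftrightarrow> (\<forall>k. 1 \<le> k \<and> k < L \<longrightarrow> (\<forall>r. X r (r+k) = 0))
     \<and> (\<forall>r. X r (r+L) = dg a r) \<and> (\<forall>r. X r (r+L+1) = dg b r)"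

definition trans3 :: "nat \<Rightarrow> nat list \<Rightarrow> nat list \<Rightarrow> nat list \<Rightarrow> nat list \<Rightarrow> bool" where
  "trans3 s a b a' b' \<longleftrightarrow> (\<forall>i<3. decode (a!i) ** decode (a!((i+s) mod 3)) = decode (a'!i)
     \<and> decode (a!i) ** decode (b!((i+s) mod 3)) + decode (b!i) ** decode (a!((i+s+1) mod 3)) = decode (b'!i))"

lemma sq_mid:
  assumes "X \<in> UT" "1 \<le> k"
  shows "imul X X r (r+k) = (\<Sum>t\<in>{r<..<r+k}. X r t ** X t (r+k))"
proof -
  have e: "{r..r+k} = insert r (insert (r+k) {r<..<r+k})" using assms(2) by auto
  have "imul X X r (r+k) = X r r ** X r (r+k) + (X r (r+k) ** X (r+k) (r+k) + (\<Sum>t\<in>{r<..<r+k}. X r t ** X t (r+k)))"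
    unfolding imul_def e using assms(2) by (simp add: sum.insert)
  also have "\<dots> = (X r (r+k) + X r (r+k)) + (\<Sum>t\<in>{r<..<r+k}. X r t ** X t (r+k))"
    using assms(1) by (simp add: UT_def add.assoc)
  finally show ?thesis by (simp add: blk_add_self)
qed

lemma sq_restrict:
  assumes "X \<in> UT" "1 \<le> L" and z: "\<forall>k. 1 \<le> k \<and> k < L \<longrightarrow> (\<forall>r. X r (r+k) = 0)"
  shows "(\<Sum>t\<in>{r<..<r+k}. X r t ** X t (r+k)) = (\<Sum>t\<in>{t. r+L \<le> t \<and> t+L \<le> r+k}. X r t ** X t (r+k))"
proof (rule sum.mono_neutral_right)
  show "finite {r<..<r+k}" by simp
  show "{t. r+L \<le> t \<and> t+L \<le> r+k} \<subseteq> {r<..<r+k}" using assms(2) by auto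
  show "\<forall>t\<in>{r<..<r+k} - {t. r+L \<le> t \<and> t+L \<le> r+k}. X r t ** X t (r+k) = 0"
  proof
    fix t assume t: "t \<in> {r<..<r+k} - {t. r+L \<le> t \<and> t+L \<le> r+k}"
    show "X r t ** X t (r+k) = 0"
    proof (cases "t < r + L")
      case True
      have "1 \<le> t - r \<and> t - r < L" using True t by auto
      then have "X r (r + (t-r)) = 0" using z by blast
      moreover have "r + (t - r) = t" using t by auto
      ultimately show ?thesis by simp
    next
      case False
      then have "r + k < t + L" using t by auto
      then have "1 \<le> r + k - t \<and> r + k - t < L" using t by auto
      then have "X t (t + (r + k - t)) = 0" using z by blast
      moreover have "t + (r + k - t) = r + k" using t by auto
      ultimately show ?thesis by simp
    qed
  qed
qed

lemma sq_Form:
  assumes X: "X \<in> UT" and L: "1 \<le> L" and F: "Form L a b X" and T: "trans3 (L mod 3) a b a' b'"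
  shows "Form (2*L) a' b' (imul X X)"
proof -
  have z: "\<forall>k. 1 \<le> k \<and> k < L \<longrightarrow> (\<forall>r. X r (r+k) = 0)"
    and A: "\<And>r. X r (r+L) = dg a r" and B: "\<And>r. X r (r+L+1) = dg b r"
    using F by (auto simp: Form_def)
  have S: "imul X X r (r+k) = (\<Sum>t\<in>{t. r+L \<le> t \<and> t+L \<le> r+k}. X r t ** X t (r+k))" if "1 \<le> k" for r k
    using sq_mid[OF X that] sq_restrict[OF X L z] by simp
  have Z: "imul X X r (r+k) = 0" if "1 \<le> k" "k < 2*L" for r k
  proof -
    have "(\<Sum>t\<in>{t. r+L \<le> t \<and> t+L \<le> r+k}. X r t ** X t (r+k)) = 0"
      by (rule sum.neutral) (use that in auto)
    then show ?thesis using S[OF that(1)] by simp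
  qed
  have m1: "(r + L) mod 3 = (r mod 3 + L mod 3) mod 3" for r by (simp add: mod_add_eq)
  have m2: "(r + L + 1) mod 3 = (r mod 3 + L mod 3 + 1) mod 3" for r
    by (metis m1 mod_add_left_eq)
  have i3: "r mod 3 < 3" for r :: nat by simp
  have D1: "imul X X r (r + 2*L) = dg a' r" for r
  proof -
    have "{t. r+L \<le> t \<and> t+L \<le> r+2*L} = {r+L}" by auto
    then have "imul X X r (r + 2*L) = X r (r+L) ** X (r+L) (r+L+L)"
      using S[of "2*L" r] L by (simp add: mult_2 add.assoc)
    also have "\<dots> = dg a r ** dg a (r+L)" using A[of r] A[of "r+L"] by simp
    also have "\<dots> = dg a' r" using T i3[of r] unfolding trans3_def dg_def m1 by blast
    finally show ?thesis .
  qed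
  have D2: "imul X X r (r + 2*L + 1) = dg b' r" for r
  proof -
    have "{t. r+L \<le> t \<and> t+L \<le> r+2*L+1} = {r+L, r+L+1}" by auto
    then have "imul X X r (r + 2*L + 1) = X r (r+L) ** X (r+L) (r+L+L+1) + X r (r+L+1) ** X (r+L+1) (r+L+1+L)"
      using S[of "2*L+1" r] L by (simp add: mult_2 add_ac)
    also have "\<dots> = dg a r ** dg b (r+L) + dg b r ** dg a (r+L+1)"
      using A[of r] A[of "r+L+1"] B[of r] B[of "r+L"] by simp
    also have "\<dots> = dg b' r" using T i3[of r] unfolding trans3_def dg_def m1 m2 by blast
    finally show ?thesis .
  qed
  show ?thesis unfolding Form_def using Z D1 D2 by auto
qed

lemma all3: "(\<forall>i<(3::nat). P i) \<longleftrightarrow> P 0 \<and> P 1 \<and> P 2"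
proof
  assume "\<forall>i<3. P i" then show "P 0 \<and> P 1 \<and> P 2" by simp
next
  assume h: "P 0 \<and> P 1 \<and> P 2"
  show "\<forall>i<3. P i"
  proof (intro allI impI)
    fix i :: nat assume "i < 3"
    then have "i = 0 \<or> i = 1 \<or> i = 2" by arith
    then show "P i" using h by auto
  qed
qed

lemma Form_has_form:
  assumes "X \<in> G" "1 \<le> L" "Form L a b X"
  shows "has_form (L - 1) [a, b] X"
proof -
  have e: "L - 1 + 1 = L" using assms(2) by simp
  have z: "\<forall>j. 1 \<le> j \<and> j \<le> L - 1 \<longrightarrow> (\<forall>r. X r (r + j) = 0)"
    using assms(2,3) unfolding Form_def by auto
  have d: "\<forall>k < length [a, b]. \<forall>r. X r (r + (L - 1) + k + 1) = decode (([a, b] ! k) ! (r mod 3))"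
  proof (intro allI impI)
    fix k r assume "k < length [a, b]"
    then have "k = 0 \<or> k = 1" by auto
    moreover have "r + (L - 1) + 0 + 1 = r + L" "r + (L - 1) + 1 + 1 = r + L + 1" using e by auto
    ultimately show "X r (r + (L - 1) + k + 1) = decode (([a, b] ! k) ! (r mod 3))"
      using assms(3) unfolding Form_def dg_def by auto
  qed
  show ?thesis unfolding has_form_def using assms(1) z d by blast
qed

lemma pow3: "2 ^ (2*j) mod 3 = (1::nat)"
proof -
  have "(2::nat) ^ (2*j) = 4 ^ j" by (simp add: power_mult)
  also have "4 ^ j mod 3 = (4 mod 3) ^ j mod (3::nat)" by (rule power_mod[symmetric])
  finally show ?thesis by simp
qed

lemma pow3b: "2 ^ (2*j+1) mod 3 = (2::nat)"
proof -
  have "(2::nat) ^ (2*j+1) = 2 * 2 ^ (2*j)" by simp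
  then show ?thesis using pow3[of j] by (simp add: mod_mult_right_eq[of 2 "2^(2*j)" 3, symmetric])
qed

lemma ipow_sq: "X \<in> UT \<Longrightarrow> ipow X (2 ^ Suc m) = imul (ipow X (2^m)) (ipow X (2^m))"
  using ipow_double[of X "2^m"] by simp

lemma chain:
  assumes X: "X \<in> UT" and F0: "Form 1 a0 b0 X"
    and T1: "trans3 1 a0 b0 c1 c2" and T2: "trans3 2 c1 c2 d1 d2" and T3: "trans3 1 d1 d2 c1 c2"
  shows "Form (2^(2*j+1)) c1 c2 (ipow X (2^(2*j+1))) \<and> Form (2^(2*j+2)) d1 d2 (ipow X (2^(2*j+2)))"
proof (induction j)
  case 0
  have i1: "ipow X 1 = X" using X by (simp add: imul_iid_left UT_LZ)
  have f2: "Form 2 c1 c2 (ipow X 2)"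
    using sq_Form[OF X _ F0, of c1 c2] T1 ipow_sq[OF X, of 0] i1 by simp
  have f4: "Form 4 d1 d2 (ipow X 4)"
    using sq_Form[OF ipow_UT[OF X] _ f2, of d1 d2] T2 ipow_sq[OF X, of 1] by simp
  show ?case using f2 f4 by simp
next
  case (Suc j)
  let ?L = "2^(2*j+2) :: nat"
  have F: "Form ?L d1 d2 (ipow X ?L)" using Suc by simp
  have m1: "?L mod 3 = 1" using pow3[of "j+1"] by (simp add: algebra_simps)
  have e1: "2^(2 * Suc j + 1) = 2 * ?L" by simp
  have f1: "Form (2^(2 * Suc j + 1)) c1 c2 (ipow X (2^(2 * Suc j + 1)))"
    unfolding e1 using sq_Form[OF ipow_UT[OF X] _ F, of c1 c2] T3 m1 ipow_double[OF X, of ?L] by simp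
  have m2: "(2 * ?L) mod 3 = 2" using pow3b[of "j+1"] by (simp add: algebra_simps)
  have e2: "2^(2 * Suc j + 2) = 2 * (2 * ?L)" by simp
  have f2: "Form (2^(2 * Suc j + 2)) d1 d2 (ipow X (2^(2 * Suc j + 2)))"
    unfolding e2 using sq_Form[OF ipow_UT[OF X] _ f1[unfolded e1], of d1 d2] T2 m2 ipow_double[OF X, of "2*?L"] by simp
  show ?case using f1 f2 by simp
qed



lemma T1x: "trans3 1 [28,235,129] [29,211,263] [51,89,196] [0,0,0]"
  unfolding trans3_def all3 by (simp add: beval)
lemma T2x: "trans3 2 [51,89,196] [0,0,0] [28,235,129] [0,0,0]"
  unfolding trans3_def all3 by (simp add: beval)
lemma T3x: "trans3 1 [28,235,129] [0,0,0] [51,89,196] [0,0,0]"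
  unfolding trans3_def all3 by (simp add: beval)
lemma T1y: "trans3 1 [28,235,129] [58,3,445] [51,89,196] [0,157,106]"
  unfolding trans3_def all3 by (simp add: beval)
lemma T2y: "trans3 2 [51,89,196] [0,157,106] [28,235,129] [39,208,186]"
  unfolding trans3_def all3 by (simp add: beval)
lemma T3y: "trans3 1 [28,235,129] [39,208,186] [51,89,196] [0,157,106]"
  unfolding trans3_def all3 by (simp add: beval)

lemma F0x: "Form 1 [28,235,129] [29,211,263] xx"
  unfolding Form_def using xx_1 xx_2 by simp
lemma F0y: "Form 1 [28,235,129] [58,3,445] yy"
  unfolding Form_def using yy_1 yy_2 by simp

theorem proposition4p1:
  fixes j :: nat
  shows "has_form (2 ^ (2*j+1) - 1) [[51,89,196],[0,0,0]] (ipow xx (2 ^ (2*j+1)))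
       \<and> has_form (2 ^ (2*j+1) - 1) [[51,89,196],[0,157,106]] (ipow yy (2 ^ (2*j+1)))
       \<and> has_form (2 ^ (2*j+2) - 1) [[28,235,129],[0,0,0]] (ipow xx (2 ^ (2*j+2)))
       \<and> has_form (2 ^ (2*j+2) - 1) [[28,235,129],[39,208,186]] (ipow yy (2 ^ (2*j+2)))"
proof -
  have cx: "Form (2^(2*j+1)) [51,89,196] [0,0,0] (ipow xx (2^(2*j+1))) \<and> Form (2^(2*j+2)) [28,235,129] [0,0,0] (ipow xx (2^(2*j+2)))"
    by (rule chain[OF G_UT[OF xxG] F0x T1x T2x T3x])
  have cy: "Form (2^(2*j+1)) [51,89,196] [0,157,106] (ipow yy (2^(2*j+1))) \<and> Form (2^(2*j+2)) [28,235,129] [39,208,186] (ipow yy (2^(2*j+2)))"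
    by (rule chain[OF G_UT[OF yyG] F0y T1y T2y T3y])
  have p: "1 \<le> (2::nat)^n" for n by simp
  show ?thesis
    using cx cy Form_has_form[OF ipow_G[OF xxG] p] Form_has_form[OF ipow_G[OF yyG] p] by blast
qed


end
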